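(* For any $x,y \in B_E$, $$\beta_E(x,y)=\sup\{ |f(x)-f(y)| : f\in\mathcal B(B_E),\ \|f\|_{inv} \leq 1 \}.$$
   Context: $E$ is a complex Hilbert space of arbitrary dimension with inner product $\langle\cdot,\cdot\rangle$ and open unit ball $B_E$; fix an orthonormal basis and let $\overline z$ denote coordinatewise conjugation. For analytic $g$, $\nabla g(x)$ is defined by $g'(x)(y)=\langle y,\overline{\nabla g(x)}\rangle$. For $a\in B_E$, $\varphi_a(y)=(s_aQ_a+P_a)\big(\frac{a-y}{1-\langle y,a\rangle}\big)$ with $s_a=\sqrt{1-\|a\|^2}$, $P_a$ the orthogonal projection onto $\mathbb Ca$, $Q_a=I-P_a$ ($\varphi_0(y)=-y$). The Bloch space $\mathcal B(B_E)$ consists of analytic $f:B_E\to\mathbb C$ with $\sup_x(1-\|x\|^2)\|f'(x)\|<\infty$, and $\|f\|_{inv}=\sup_{x\in B_E}\|\nabla(f\circ\varphi_x)(0)\|$. $\rho_E(x,y)=\|\varphi_x(y)\|$ and $\beta_E(x,y)=\frac12\log\frac{1+\rho_E(x,y)}{1-\rho_E(x,y)}$. *)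

theory Defs
  imports "HOL-Analysis.Analysis"
begin

class chilbert = real_normed_vector + complete_space +
  fixes scaleC :: "complex \<Rightarrow> 'a \<Rightarrow> 'a"
    and cinner :: "'a \<Rightarrow> 'a \<Rightarrow> complex"
  assumes scaleR_scaleC: "scaleR r x = scaleC (complex_of_real r) x"
    and scaleC_add_right: "scaleC c (x + y) = scaleC c x + scaleC c y"
    and scaleC_add_left: "scaleC (c + d) x = scaleC c x + scaleC d x"
    and scaleC_scaleC: "scaleC c (scaleC d x) = scaleC (c * d) x"
    and scaleC_one: "scaleC 1 x = x"
    and norm_scaleC: "norm (scaleC c x) = cmod c * norm x"
    and cinner_add_left: "cinner (x + y) z = cinner x z + cinner y z"
    and cinner_scaleC_left: "cinner (scaleC c x) y = c * cinner x y"
    and cinner_commute: "cinner y x = cnj (cinner x y)"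
    and cinner_self_norm: "cinner x x = complex_of_real ((norm x)^2)"

definition hholo_on :: "('a::chilbert \<Rightarrow> complex) \<Rightarrow> 'a set \<Rightarrow> bool" where
  "hholo_on f U \<longleftrightarrow> open U \<and>
     (\<forall>x\<in>U. \<exists>L. (f has_derivative L) (at x) \<and> (\<forall>c v. L (scaleC c v) = c * L v))"

definition projP :: "'a::chilbert \<Rightarrow> 'a \<Rightarrow> 'a" where
  "projP a y = (if a = 0 then 0 else scaleC (cinner y a / cinner a a) a)"

definition phi :: "'a::chilbert \<Rightarrow> 'a \<Rightarrow> 'a" where
  "phi a y = (let z = scaleC (1 / (1 - cinner y a)) (a - y);
                  s = sqrt (1 - (norm a)^2)
              in scaleR s (z - projP a z) + projP a z)"

text \<open>Norm of the derivative f'(x) as a (bounded) functional; this equals the norm of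
the gradient, since coordinatewise conjugation is an isometry.\<close>
definition dnorm :: "('a::chilbert \<Rightarrow> complex) \<Rightarrow> 'a \<Rightarrow> real" where
  "dnorm f x = onorm (frechet_derivative f (at x))"

definition bloch :: "('a::chilbert \<Rightarrow> complex) set" where
  "bloch = {f. hholo_on f (ball 0 1) \<and>
               bdd_above ((\<lambda>x. (1 - (norm x)^2) * dnorm f x) ` ball 0 1)}"

text \<open>The invariant norm (possibly infinite, hence in ereal).\<close>
definition inv_norm :: "('a::chilbert \<Rightarrow> complex) \<Rightarrow> ereal" where
  "inv_norm f = (SUP x\<in>ball 0 1. ereal (dnorm (f \<circ> phi x) 0))"

definition rhoE :: "'a::chilbert \<Rightarrow> 'a \<Rightarrow> real" where
  "rhoE x y = norm (phi x y)"

definition betaE :: "'a::chilbert \<Rightarrow> 'a \<Rightarrow> real" where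
  "betaE x y = (1/2) * ln ((1 + rhoE x y) / (1 - rhoE x y))"

end

theory Submission
  imports Defs "HOL-Complex_Analysis.Complex_Analysis"
begin

lemma scaleC_zero_left[simp]: "scaleC 0 (x::'a::chilbert) = 0"
  using scaleC_add_left[of 0 0 x] by simp

lemma scaleC_zero_right[simp]: "scaleC c (0::'a::chilbert) = 0"
  using scaleC_add_right[of c 0 0] by simp

lemma scaleC_minus_right: "scaleC c (- (x::'a::chilbert)) = - scaleC c x"
  using scaleC_add_right[of c "-x" x] by (simp add: eq_neg_iff_add_eq_0)

lemma scaleC_minus_left: "scaleC (- c) (x::'a::chilbert) = - scaleC c x"
  using scaleC_add_left[of "-c" c x] by (simp add: eq_neg_iff_add_eq_0)

lemma scaleC_diff_right: "scaleC c ((x::'a::chilbert) - y) = scaleC c x - scaleC c y"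
  using scaleC_add_right[of c x "-y"] by (simp add: scaleC_minus_right)

lemma scaleC_diff_left: "scaleC (c - d) (x::'a::chilbert) = scaleC c x - scaleC d x"
  using scaleC_add_left[of c "-d" x] by (simp add: scaleC_minus_left)

lemma scaleC_of_real: "scaleC (of_real r) (x::'a::chilbert) = r *\<^sub>R x"
  by (simp add: scaleR_scaleC)

lemma scaleC_one'[simp]: "scaleC 1 (x::'a::chilbert) = x" by (rule scaleC_one)

lemma scaleC_scaleR: "scaleC c (r *\<^sub>R (x::'a::chilbert)) = r *\<^sub>R scaleC c x"
  by (simp add: scaleR_scaleC scaleC_scaleC mult.commute)

lemma scaleR_scaleC': "r *\<^sub>R scaleC c (x::'a::chilbert) = scaleC (of_real r * c) x"
  by (simp add: scaleR_scaleC scaleC_scaleC)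

lemma cinner_zero_left[simp]: "cinner 0 (y::'a::chilbert) = 0"
  using cinner_add_left[of 0 0 y] by simp

lemma cinner_minus_left: "cinner (- x) (y::'a::chilbert) = - cinner x y"
  using cinner_add_left[of "-x" x y] by (simp add: eq_neg_iff_add_eq_0)

lemma cinner_diff_left: "cinner (x - z) (y::'a::chilbert) = cinner x y - cinner z y"
  using cinner_add_left[of x "-z" y] by (simp add: cinner_minus_left)

lemma cinner_add_right: "cinner x (y + (z::'a::chilbert)) = cinner x y + cinner x z"
  by (metis cinner_add_left cinner_commute complex_cnj_add)

lemma cinner_scaleC_right: "cinner x (scaleC c (y::'a::chilbert)) = cnj c * cinner x y"
  by (metis cinner_commute cinner_scaleC_left complex_cnj_mult)

lemma cinner_zero_right[simp]: "cinner x (0::'a::chilbert) = 0"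
  by (metis cinner_commute cinner_zero_left complex_cnj_zero)

lemma cinner_minus_right: "cinner x (- (y::'a::chilbert)) = - cinner x y"
  by (metis cinner_commute cinner_minus_left complex_cnj_minus)

lemma cinner_diff_right: "cinner x (y - (z::'a::chilbert)) = cinner x y - cinner x z"
  by (metis cinner_commute cinner_diff_left complex_cnj_diff)

lemma cinner_scaleR_left: "cinner (r *\<^sub>R x) (y::'a::chilbert) = of_real r * cinner x y"
  by (simp add: scaleR_scaleC cinner_scaleC_left)

lemma cinner_scaleR_right: "cinner x (r *\<^sub>R (y::'a::chilbert)) = of_real r * cinner x y"
  by (simp add: scaleR_scaleC cinner_scaleC_right)

lemma norm_sq_cinner: "(norm (x::'a::chilbert))^2 = Re (cinner x x)"
  by (simp add: cinner_self_norm)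

lemma Im_cinner_self[simp]: "Im (cinner (x::'a::chilbert) x) = 0"
  by (simp add: cinner_self_norm)

lemma cinner_self_cnj: "cnj (cinner (x::'a::chilbert) x) = cinner x x"
  by (simp add: cinner_self_norm)

lemma cauchy_schwarz_c: "cmod (cinner (x::'a::chilbert) y) \<le> norm x * norm y"
proof (cases "y = 0")
  case True then show ?thesis by simp
next
  case False
  define Y where "Y = (norm y)^2"
  have Y: "Y > 0" using False by (simp add: Y_def)
  define m where "m = cinner x y"
  define t where "t = m / of_real Y"
  have yy: "cinner y y = of_real Y" by (simp add: Y_def cinner_self_norm)
  have yx: "cinner y x = cnj m" by (simp add: m_def cinner_commute[of y x])
  have "cinner (x - scaleC t y) (x - scaleC t y)
      = cinner x x - cnj t * m - t * cnj m + t * cnj t * of_real Y"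
    by (simp add: cinner_diff_left cinner_diff_right cinner_scaleC_left cinner_scaleC_right
        yy yx m_def algebra_simps)
  also have "\<dots> = cinner x x - of_real ((cmod m)^2 / Y)"
    using Y by (simp add: t_def field_simps) (simp add: complex_norm_square[symmetric])
  finally have "Re (cinner (x - scaleC t y) (x - scaleC t y)) = (norm x)^2 - (cmod m)^2 / Y"
    by (simp add: norm_sq_cinner)
  moreover have "Re (cinner (x - scaleC t y) (x - scaleC t y)) \<ge> 0"
    by (simp add: norm_sq_cinner[symmetric])
  ultimately have "(cmod m)^2 / Y \<le> (norm x)^2" by simp
  then have "(cmod m)^2 \<le> (norm x)^2 * (norm y)^2" using Y by (simp add: Y_def field_simps)
  then have "(cmod m)^2 \<le> (norm x * norm y)^2" by (simp add: power_mult_distrib)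
  then show ?thesis unfolding m_def by (rule power2_le_imp_le) simp
qed

lemma bounded_linear_cinner_left: "bounded_linear (\<lambda>y::'a::chilbert. cinner y a)"
proof (rule bounded_linear_intro[where K="norm a"])
  show "cinner (x + y) a = cinner x a + cinner y a" for x y by (rule cinner_add_left)
  show "cinner (r *\<^sub>R x) a = r *\<^sub>R cinner x a" for r x
    by (simp add: cinner_scaleR_left scaleR_conv_of_real)
  show "norm (cinner x a) \<le> norm x * norm a" for x by (rule cauchy_schwarz_c)
qed

lemma bounded_linear_scaleC_right: "bounded_linear (\<lambda>y::'a::chilbert. scaleC c y)"
proof (rule bounded_linear_intro[where K="cmod c"])
  show "scaleC c (x + y) = scaleC c x + scaleC c y" for x y by (rule scaleC_add_right)
  show "scaleC c (r *\<^sub>R x) = r *\<^sub>R scaleC c x" for r x by (rule scaleC_scaleR)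
  show "norm (scaleC c x) \<le> norm x * cmod c" for x by (simp add: norm_scaleC)
qed

lemma bounded_bilinear_scaleC: "bounded_bilinear (\<lambda>c (x::'a::chilbert). scaleC c x)"
proof (rule bounded_bilinear.intro)
  show "scaleC (a + a') b = scaleC a b + scaleC a' b" for a a' b by (rule scaleC_add_left)
  show "scaleC a (b + b') = scaleC a b + scaleC a b'" for a b b' by (rule scaleC_add_right)
  show "scaleC (r *\<^sub>R a) b = r *\<^sub>R scaleC a b" for r a b
    by (simp add: scaleR_conv_of_real scaleR_scaleC')
  show "scaleC a (r *\<^sub>R b) = r *\<^sub>R scaleC a b" for r a b by (rule scaleC_scaleR)
  show "\<exists>K. \<forall>a b. norm (scaleC a (b::'a)) \<le> norm a * norm b * K"
    by (rule exI[of _ 1]) (simp add: norm_scaleC)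
qed

lemma bounded_linear_scaleC_left: "bounded_linear (\<lambda>c. scaleC c (v::'a::chilbert))"
  by (rule bounded_bilinear.bounded_linear_left[OF bounded_bilinear_scaleC])

definition Zf :: "'a::chilbert \<Rightarrow> 'a \<Rightarrow> 'a" where
  "Zf a y = scaleC (1 / (1 - cinner y a)) (a - y)"

definition Lin :: "'a::chilbert \<Rightarrow> 'a \<Rightarrow> 'a" where
  "Lin a z = sqrt (1 - (norm a)^2) *\<^sub>R (z - projP a z) + projP a z"

lemma phi_eq: "phi a y = Lin a (Zf a y)"
  by (simp add: phi_def Zf_def Lin_def Let_def)

lemma cinner_self_of_real: "cinner (a::'a::chilbert) a = of_real ((norm a)^2)"
  by (rule cinner_self_norm)

lemma projP_eq: "(a::'a::chilbert) \<noteq> 0 \<Longrightarrow> projP a z = scaleC (cinner z a / of_real ((norm a)^2)) a"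
  by (simp add: projP_def cinner_self_norm)

lemma projP_0[simp]: "projP 0 z = 0"
  by (simp add: projP_def)

lemma bounded_linear_projP: "bounded_linear (projP (a::'a::chilbert))"
proof (cases "a = 0")
  case True
  have "projP a = (\<lambda>z. 0)" using True by (simp add: fun_eq_iff)
  then show ?thesis by (simp add: bounded_linear_zero)
next
  case False
  have b1: "bounded_linear (\<lambda>z. cinner z a / of_real ((norm a)^2))"
    by (rule bounded_linear_compose[OF bounded_linear_divide bounded_linear_cinner_left])
  have "bounded_linear (\<lambda>z. scaleC (cinner z a / of_real ((norm a)^2)) a)"
    by (rule bounded_linear_compose[OF bounded_linear_scaleC_left b1])
  moreover have "projP a = (\<lambda>z. scaleC (cinner z a / of_real ((norm a)^2)) a)"
    using False by (simp add: fun_eq_iff projP_eq)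
  ultimately show ?thesis by simp
qed

lemma projP_scaleC: "projP (a::'a::chilbert) (scaleC c z) = scaleC c (projP a z)"
  by (cases "a = 0") (simp_all add: projP_eq cinner_scaleC_left scaleC_scaleC)

lemma bounded_linear_Lin: "bounded_linear (Lin (a::'a::chilbert))"
proof -
  have bl: "bounded_linear (\<lambda>x. x - projP a x)"
    by (intro bounded_linear_sub bounded_linear_ident bounded_linear_projP)
  have "bounded_linear (\<lambda>x. sqrt (1 - (norm a)^2) *\<^sub>R (x - projP a x))"
    by (rule bounded_linear_compose[OF bounded_linear_scaleR_right[of "sqrt (1 - (norm a)^2)"] bl])
  then show ?thesis unfolding Lin_def[abs_def]
    by (intro bounded_linear_add bounded_linear_projP)
qed

lemma Lin_scaleC: "Lin (a::'a::chilbert) (scaleC c z) = scaleC c (Lin a z)"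
  by (simp add: Lin_def projP_scaleC scaleC_add_right scaleC_diff_right scaleC_scaleR)

lemma Lin_0_eq: "Lin 0 z = (z::'a::chilbert)"
  by (simp add: Lin_def)

lemma cinner_coord: "cinner u a = 0 \<Longrightarrow> cinner (scaleC \<alpha> a + u) (a::'a::chilbert) = \<alpha> * of_real ((norm a)^2)"
  by (simp add: cinner_add_left cinner_scaleC_left cinner_self_norm)

lemma phi_coord:
  fixes a u :: "'a::chilbert"
  assumes a: "a \<noteq> 0" and u: "cinner u a = 0" and D: "1 - \<alpha> * of_real ((norm a)^2) \<noteq> 0"
  shows "phi a (scaleC \<alpha> a + u) =
    scaleC ((1 - \<alpha>) / (1 - \<alpha> * of_real ((norm a)^2))) a
    + scaleC (- of_real (sqrt (1 - (norm a)^2)) / (1 - \<alpha> * of_real ((norm a)^2))) u"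
proof -
  define AA where "AA = (of_real ((norm a)^2) :: complex)"
  define D where "D = 1 - \<alpha> * AA"
  define s where "s = sqrt (1 - (norm a)^2)"
  have AA: "AA \<noteq> 0" using a by (simp add: AA_def)
  have D0: "D \<noteq> 0" using D by (simp add: D_def AA_def)
  have ci: "cinner (scaleC \<alpha> a + u) a = \<alpha> * AA" using cinner_coord[OF u] by (simp add: AA_def)
  have e1: "a - (scaleC \<alpha> a + u) = scaleC (1 - \<alpha>) a - u"
    by (simp add: scaleC_diff_left)
  have Z: "Zf a (scaleC \<alpha> a + u) = scaleC ((1 - \<alpha>) / D) a - scaleC (1 / D) u"
    unfolding Zf_def ci e1 by (simp add: D_def scaleC_diff_right scaleC_scaleC)
  have cZ: "cinner (Zf a (scaleC \<alpha> a + u)) a = ((1 - \<alpha>) / D) * AA"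
    by (simp add: Z cinner_diff_left cinner_scaleC_left u cinner_self_norm AA_def)
  have P: "projP a (Zf a (scaleC \<alpha> a + u)) = scaleC ((1 - \<alpha>) / D) a"
    using AA by (simp add: projP_eq[OF a] cZ AA_def[symmetric] del: of_real_power)
  have "phi a (scaleC \<alpha> a + u) = s *\<^sub>R (Zf a (scaleC \<alpha> a + u) - projP a (Zf a (scaleC \<alpha> a + u))) + projP a (Zf a (scaleC \<alpha> a + u))"
    by (simp add: phi_eq Lin_def s_def)
  also have "\<dots> = s *\<^sub>R (- scaleC (1 / D) u) + scaleC ((1 - \<alpha>) / D) a"
    unfolding P unfolding Z by simp
  also have "s *\<^sub>R (- scaleC (1 / D) u) = scaleC (- of_real s / D) u"
    by (simp add: scaleR_scaleC scaleC_scaleC scaleC_minus_right scaleC_minus_left[symmetric])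
  finally show ?thesis by (simp add: D_def AA_def s_def add.commute)
qed

lemma norm_coord:
  fixes a u :: "'a::chilbert"
  assumes u: "cinner u a = 0"
  shows "(norm (scaleC \<alpha> a + u))^2 = (cmod \<alpha>)^2 * (norm a)^2 + (norm u)^2"
proof -
  have ua: "cinner a u = 0" using u by (metis cinner_commute complex_cnj_zero)
  have "cinner (scaleC \<alpha> a + u) (scaleC \<alpha> a + u) = \<alpha> * cnj \<alpha> * cinner a a + cinner u u"
    by (simp add: cinner_add_left cinner_add_right cinner_scaleC_left cinner_scaleC_right u ua)
  then have "Re (cinner (scaleC \<alpha> a + u) (scaleC \<alpha> a + u)) = (cmod \<alpha>)^2 * (norm a)^2 + (norm u)^2"
    by (simp add: cinner_self_norm complex_norm_square[symmetric])
  then show ?thesis by (simp add: norm_sq_cinner)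
qed

lemma decomp:
  fixes a y :: "'a::chilbert"
  assumes a: "a \<noteq> 0"
  obtains \<alpha> u where "y = scaleC \<alpha> a + u" "cinner u a = 0" "cinner y a = \<alpha> * of_real ((norm a)^2)"
proof -
  define \<alpha> where "\<alpha> = cinner y a / of_real ((norm a)^2)"
  define u where "u = y - scaleC \<alpha> a"
  have "cinner u a = 0" using a
    by (simp add: u_def \<alpha>_def cinner_diff_left cinner_scaleC_left cinner_self_norm)
  moreover have "cinner y a = \<alpha> * of_real ((norm a)^2)" using a by (simp add: \<alpha>_def)
  ultimately show ?thesis using that[of \<alpha> u] by (simp add: u_def)
qed

lemma phi_zero_left: "phi 0 y = - (y::'a::chilbert)"
  by (simp add: phi_eq Lin_0_eq Zf_def)

lemma phi_0: "phi a 0 = (a::'a::chilbert)"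
proof (cases "a = 0")
  case True then show ?thesis by (simp add: phi_zero_left)
next
  case False
  have "projP a a = a" using False by (simp add: projP_eq cinner_self_norm)
  then show ?thesis by (simp add: phi_eq Zf_def Lin_def)
qed

lemma phi_self: "phi a a = (0::'a::chilbert)"
proof -
  have "projP a 0 = 0" using bounded_linear_projP[of a] linear_0 bounded_linear.linear by blast
  then show ?thesis by (simp add: phi_eq Zf_def Lin_def)
qed

lemma cinner_ne_1:
  fixes y a :: "'a::chilbert"
  assumes "norm y < 1" "norm a < 1"
  shows "cinner y a \<noteq> 1"
proof
  assume "cinner y a = 1"
  then have "1 \<le> norm y * norm a" using cauchy_schwarz_c[of y a] by simp
  moreover have "norm y * norm a < 1"
  proof -
    have "norm y * norm a \<le> norm y" using assms by (simp add: mult_left_le)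
    then show ?thesis using assms by simp
  qed
  ultimately show False by simp
qed

lemma phi_phi:
  fixes a y :: "'a::chilbert"
  assumes na: "norm a < 1" and ya: "cinner y a \<noteq> 1"
  shows "phi a (phi a y) = y"
proof (cases "a = 0")
  case True then show ?thesis by (simp add: phi_zero_left)
next
  case a: False
  obtain \<alpha> u where y: "y = scaleC \<alpha> a + u" and u: "cinner u a = 0"
    and ci: "cinner y a = \<alpha> * of_real ((norm a)^2)"
    using decomp[OF a] by blast
  define AA where "AA = (of_real ((norm a)^2) :: complex)"
  define s where "s = (of_real (sqrt (1 - (norm a)^2)) :: complex)"
  define D where "D = 1 - \<alpha> * AA"
  have D: "D \<noteq> 0" using ya ci by (simp add: D_def AA_def)
  have A1: "1 - AA \<noteq> 0"
  proof
    assume "1 - AA = 0"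
    then have "(norm a)^2 = 1" by (simp add: AA_def complex_eq_iff)
    moreover have "(norm a)^2 < 1" using na by (simp add: abs_square_less_1)
    ultimately show False by simp
  qed
  have ss: "s * s = 1 - AA"
  proof -
    have "(norm a)^2 < 1" using na by (simp add: abs_square_less_1)
    then have "sqrt (1 - (norm a)^2) * sqrt (1 - (norm a)^2) = 1 - (norm a)^2" by simp
    then have "complex_of_real (sqrt (1 - (norm a)^2) * sqrt (1 - (norm a)^2)) = of_real (1 - (norm a)^2)"
      by metis
    then show ?thesis unfolding s_def AA_def of_real_mult of_real_diff by simp
  qed
  have p1: "phi a y = scaleC ((1 - \<alpha>) / D) a + scaleC (- s / D) u"
    using phi_coord[OF a u] D unfolding y by (simp add: D_def AA_def s_def)
  have u': "cinner (scaleC (- s / D) u) a = 0" by (simp add: cinner_scaleC_left u)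
  have D': "1 - ((1 - \<alpha>) / D) * AA = (1 - AA) / D" using D by (simp add: D_def field_simps)
  have D'0: "1 - ((1 - \<alpha>) / D) * of_real ((norm a)^2) \<noteq> 0"
    using D'[unfolded AA_def] D A1 by (simp add: AA_def)
  have "phi a (phi a y) = scaleC ((1 - ((1 - \<alpha>) / D)) / ((1 - AA) / D)) a
        + scaleC (- s / ((1 - AA) / D)) (scaleC (- s / D) u)"
    unfolding p1 using phi_coord[OF a u' D'0] D' by (simp add: AA_def s_def)
  also have "(1 - ((1 - \<alpha>) / D)) / ((1 - AA) / D) = \<alpha>"
  proof -
    have "1 - (1 - \<alpha>) / D = \<alpha> * (1 - AA) / D" using D by (simp add: field_simps D_def)
    then show ?thesis using D A1 by simp
  qed
  also have "scaleC (- s / ((1 - AA) / D)) (scaleC (- s / D) u) = u"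
  proof -
    have "(- s / ((1 - AA) / D)) * (- s / D) = 1" using D A1 ss by (simp add: field_simps)
    then show ?thesis by (simp add: scaleC_scaleC)
  qed
  finally show ?thesis using y by simp
qed

lemma cmod_D_identity:
  fixes \<alpha> :: complex and A :: real
  shows "(cmod (1 - \<alpha> * of_real A))^2 = (cmod (1 - \<alpha>))^2 * A + (1 - A) * (1 - (cmod \<alpha>)^2 * A)"
  by (simp only: cmod_power2) (simp add: power2_eq_square algebra_simps)

lemma phi_ball:
  fixes a y :: "'a::chilbert"
  assumes na: "norm a < 1" and ny: "norm y < 1"
  shows "norm (phi a y) < 1"
proof (cases "a = 0")
  case True then show ?thesis using ny by (simp add: phi_zero_left)
next
  case a: False
  obtain \<alpha> u where y: "y = scaleC \<alpha> a + u" and u: "cinner u a = 0"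
    and ci: "cinner y a = \<alpha> * of_real ((norm a)^2)"
    using decomp[OF a] by blast
  define A where "A = (norm a)^2"
  define D where "D = 1 - \<alpha> * of_real A"
  have A0: "0 < A" "A < 1" using a na by (simp_all add: A_def power_less_one_iff)
  have D: "D \<noteq> 0" using cinner_ne_1[OF ny na] ci by (simp add: D_def A_def)
  have yn: "(cmod \<alpha>)^2 * A + (norm u)^2 < 1"
  proof -
    have "(norm y)^2 < 1" using ny by (simp add: abs_square_less_1)
    then show ?thesis using norm_coord[OF u, of \<alpha>] y by (simp add: A_def)
  qed
  have p1: "phi a y = scaleC ((1 - \<alpha>) / D) a + scaleC (- of_real (sqrt (1 - A)) / D) u"
    using phi_coord[OF a u] D unfolding y by (simp add: D_def A_def)
  have u': "cinner (scaleC (- of_real (sqrt (1 - A)) / D) u) a = 0" by (simp add: cinner_scaleC_left u)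
  have "(norm (phi a y))^2 = (cmod ((1 - \<alpha>) / D))^2 * A + (cmod (- of_real (sqrt (1 - A)) / D) * norm u)^2"
    unfolding p1 norm_coord[OF u'] by (simp add: norm_scaleC A_def)
  also have "\<dots> = ((cmod (1 - \<alpha>))^2 * A + (1 - A) * (norm u)^2) / (cmod D)^2"
    using A0 D by (simp add: norm_divide power_divide power_mult_distrib add_divide_distrib)
  also have "\<dots> < 1"
  proof -
    have "(1 - A) * (norm u)^2 < (1 - A) * (1 - (cmod \<alpha>)^2 * A)"
      using A0 yn by (intro mult_strict_left_mono) auto
    then have "(cmod (1 - \<alpha>))^2 * A + (1 - A) * (norm u)^2 < (cmod D)^2"
      unfolding D_def cmod_D_identity by simp
    then show ?thesis using D by simp
  qed
  finally show ?thesis by (simp add: abs_square_less_1)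
qed

definition vder :: "('a::chilbert \<Rightarrow> 'b::chilbert) \<Rightarrow> ('a \<Rightarrow> 'b) \<Rightarrow> 'a \<Rightarrow> bool" where
  "vder F L y \<longleftrightarrow> (F has_derivative L) (at y) \<and> (\<forall>c v. L (scaleC c v) = scaleC c (L v))"

definition sder :: "('a::chilbert \<Rightarrow> complex) \<Rightarrow> ('a \<Rightarrow> complex) \<Rightarrow> 'a \<Rightarrow> bool" where
  "sder g G y \<longleftrightarrow> (g has_derivative G) (at y) \<and> (\<forall>c v. G (scaleC c v) = c * G v)"

definition Zd :: "'a::chilbert \<Rightarrow> 'a \<Rightarrow> 'a \<Rightarrow> 'a" where
  "Zd a y h = scaleC (1 / (1 - cinner y a)) (- h) + scaleC (cinner h a / (1 - cinner y a)^2) (a - y)"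

definition Dphi :: "'a::chilbert \<Rightarrow> 'a \<Rightarrow> 'a \<Rightarrow> 'a" where
  "Dphi a y h = Lin a (Zd a y h)"

lemma inv_deriv:
  assumes "w \<noteq> (1::complex)"
  shows "((\<lambda>w. 1 / (1 - w)) has_field_derivative (1 / (1 - w)^2)) (at w)"
  using assms by (auto intro!: derivative_eq_intros simp: field_simps power2_eq_square)

lemma Zf_deriv:
  fixes a y :: "'a::chilbert"
  assumes ya: "cinner y a \<noteq> 1"
  shows "(Zf a has_derivative Zd a y) (at y)"
proof -
  have c: "((\<lambda>y. cinner y a) has_derivative (\<lambda>h. cinner h a)) (at y)"
    by (rule bounded_linear.has_derivative[OF bounded_linear_cinner_left has_derivative_ident])
  have q: "((\<lambda>y. 1 / (1 - cinner y a)) has_derivative (\<lambda>h. (1 / (1 - cinner y a)^2) * cinner h a)) (at y)"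
    using has_derivative_compose[OF c inv_deriv[OF ya, unfolded has_field_derivative_def]] by simp
  have d: "((\<lambda>y. a - y) has_derivative (\<lambda>h. 0 - h)) (at y)"
    by (intro has_derivative_diff has_derivative_const has_derivative_ident)
  have D: "((\<lambda>y. scaleC (1 / (1 - cinner y a)) (a - y)) has_derivative
     (\<lambda>h. scaleC (1 / (1 - cinner y a)) (0 - h) + scaleC ((1 / (1 - cinner y a)^2) * cinner h a) (a - y))) (at y)"
    by (rule bounded_bilinear.FDERIV[OF bounded_bilinear_scaleC q d])
  have eq: "Zf a = (\<lambda>y. scaleC (1 / (1 - cinner y a)) (a - y))" by (simp add: fun_eq_iff Zf_def)
  show ?thesis unfolding eq
    by (rule has_derivative_eq_rhs[OF D]) (simp add: fun_eq_iff Zd_def)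
qed

lemma Zd_scaleC: "Zd a y (scaleC c h) = scaleC c (Zd a y (h::'a::chilbert))"
  by (simp add: Zd_def scaleC_add_right scaleC_diff_right scaleC_minus_right scaleC_scaleC cinner_scaleC_left mult.commute)

lemma vder_phi:
  fixes a y :: "'a::chilbert"
  assumes ya: "cinner y a \<noteq> 1"
  shows "vder (phi a) (Dphi a y) y"
proof -
  have "((\<lambda>y. Lin a (Zf a y)) has_derivative (\<lambda>h. Lin a (Zd a y h))) (at y)"
    by (rule bounded_linear.has_derivative[OF bounded_linear_Lin Zf_deriv[OF ya]])
  moreover have "phi a = (\<lambda>y. Lin a (Zf a y))" by (simp add: fun_eq_iff phi_eq)
  ultimately show ?thesis
    by (simp add: vder_def Dphi_def[abs_def] Zd_scaleC Lin_scaleC)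
qed

lemma vder_comp:
  assumes "vder F L y" "vder H K (F y)"
  shows "vder (\<lambda>z. H (F z)) (\<lambda>h. K (L h)) y"
  using assms unfolding vder_def by (auto intro: has_derivative_compose)

lemma sder_comp:
  assumes "vder F L y" "sder g G (F y)"
  shows "sder (\<lambda>z. g (F z)) (\<lambda>h. G (L h)) y"
  using assms unfolding vder_def sder_def by (auto intro: has_derivative_compose)

lemma sder_cinner:
  assumes "vder F L y"
  shows "sder (\<lambda>z. cinner (F z) u) (\<lambda>h. cinner (L h) u) y"
  using assms unfolding vder_def sder_def
  by (auto simp: cinner_scaleC_left intro: bounded_linear.has_derivative[OF bounded_linear_cinner_left])

lemma sder_field:
  assumes "sder g G y" "(T has_field_derivative D) (at (g y))"
  shows "sder (\<lambda>z. T (g z)) (\<lambda>h. D * G h) y"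
  using assms unfolding sder_def has_field_derivative_def
  by (auto intro: has_derivative_compose)

lemma line_deriv:
  fixes g :: "'a::chilbert \<Rightarrow> complex"
  assumes "sder g G (z0 + scaleC l w)"
  shows "((\<lambda>m. g (z0 + scaleC m w)) has_field_derivative G w) (at l)"
proof -
  have i: "((\<lambda>m. z0 + scaleC m w) has_derivative (\<lambda>h. 0 + scaleC h w)) (at l)"
    by (intro has_derivative_add has_derivative_const
        bounded_linear.has_derivative[OF bounded_linear_scaleC_left has_derivative_ident])
  have "((\<lambda>m. g (z0 + scaleC m w)) has_derivative (\<lambda>h. G (0 + scaleC h w))) (at l)"
    using has_derivative_compose[OF i] assms unfolding sder_def by blast
  then have "((\<lambda>m. g (z0 + scaleC m w)) has_derivative (\<lambda>h. h * G w)) (at l)"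
    using assms unfolding sder_def by simp
  then show ?thesis unfolding has_field_derivative_def
    by (rule has_derivative_eq_rhs) (simp add: fun_eq_iff mult.commute)
qed

lemma hholo_sder:
  assumes "hholo_on f U" "x \<in> U"
  obtains G where "sder f G x"
  using assms unfolding hholo_on_def sder_def by blast

lemma dnorm_sder: "sder g G y \<Longrightarrow> dnorm g y = onorm G"
  unfolding sder_def dnorm_def by (metis frechet_derivative_at)

lemma sder_linear: "sder g G y \<Longrightarrow> bounded_linear G"
  unfolding sder_def using has_derivative_bounded_linear by blast

lemma vder_linear: "vder F L y \<Longrightarrow> bounded_linear L"
  unfolding vder_def using has_derivative_bounded_linear by blast

lemma Dphi_radial:
  fixes v :: "'a::chilbert"
  assumes v: "norm v = 1"
  shows "Dphi (t *\<^sub>R v) 0 v = (- (1 - t^2)) *\<^sub>R v"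
proof -
  have vv: "cinner v v = 1" using v by (simp add: cinner_self_norm)
  have z: "Zd (t *\<^sub>R v) 0 v = (- (1 - t^2)) *\<^sub>R v"
    by (simp add: Zd_def cinner_scaleR_right vv scaleC_of_real power2_eq_square algebra_simps)
  have L: "Lin (t *\<^sub>R v) v = v"
  proof (cases "t = 0")
    case True then show ?thesis by (simp add: Lin_0_eq)
  next
    case False
    then have p0: "t *\<^sub>R v \<noteq> 0" using v by auto
    have "projP (t *\<^sub>R v) v = v"
      using False v by (simp add: projP_eq[OF p0] cinner_scaleR_right vv power2_eq_square scaleC_scaleR
          scaleR_scaleC' )
    then show ?thesis by (simp add: Lin_def)
  qed
  have "Lin (t *\<^sub>R v) ((- (1 - t^2)) *\<^sub>R v) = (- (1 - t^2)) *\<^sub>R Lin (t *\<^sub>R v) v"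
    by (rule linear_scale[OF bounded_linear.linear[OF bounded_linear_Lin]])
  then show ?thesis by (simp add: Dphi_def z L)
qed

lemma disc_aut_identity:
  fixes c z :: complex
  shows "(cmod (1 - cnj c * z))^2 - (cmod (c - z))^2 = (1 - (cmod c)^2) * (1 - (cmod z)^2)"
  by (simp only: cmod_power2) (simp add: power2_eq_square algebra_simps)

lemma disc_aut_bound:
  fixes c z :: complex
  assumes "cmod c < 1" "cmod z < 1"
  shows "cmod ((c - z) / (1 - cnj c * z)) < 1" and "1 - cnj c * z \<noteq> 0"
proof -
  have c2: "(cmod c)^2 < 1" and z2: "(cmod z)^2 < 1" using assms by (simp_all add: abs_square_less_1)
  have "0 < (1 - (cmod c)^2) * (1 - (cmod z)^2)" using c2 z2 by simp
  then have lt: "(cmod (c - z))^2 < (cmod (1 - cnj c * z))^2" using disc_aut_identity[of c z] by simp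
  then have "cmod (c - z) < cmod (1 - cnj c * z)"
    by (rule power_less_imp_less_base) simp
  moreover have "cmod (1 - cnj c * z) > 0" using lt
    by (metis norm_ge_zero order_le_less_trans power_less_imp_less_base zero_le_power2)
  ultimately show "cmod ((c - z) / (1 - cnj c * z)) < 1" by (simp add: norm_divide)
  show "1 - cnj c * z \<noteq> 0" using \<open>cmod (1 - cnj c * z) > 0\<close> by auto
qed

lemma M_deriv:
  fixes c z :: complex
  assumes "1 - cnj c * z \<noteq> 0"
  shows "((\<lambda>z. (c - z) / (1 - cnj c * z)) has_field_derivative ((cnj c * c - 1) / (1 - cnj c * z)^2)) (at z)"
  using assms by (auto intro!: derivative_eq_intros simp: field_simps power2_eq_square)

lemma SP:
  fixes g :: "'a::chilbert \<Rightarrow> complex"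
  assumes r: "r > 0"
    and hol: "\<And>z. z \<in> ball z0 r \<Longrightarrow> \<exists>G. sder g G z"
    and bd: "\<And>z. z \<in> ball z0 r \<Longrightarrow> cmod (g z) < 1"
    and G0: "sder g G0 z0"
  shows "cmod (G0 e) * r \<le> (1 - (cmod (g z0))^2) * norm e"
proof (cases "e = 0")
  case True
  have "G0 0 = 0" using sder_linear[OF G0] linear_0 bounded_linear.linear by blast
  then show ?thesis using True by simp
next
  case False
  define c where "c = g z0"
  have c1: "cmod c < 1" using bd r by (simp add: c_def)
  define e1 where "e1 = scaleC (of_real (r / norm e)) e"
  have ne1: "norm e1 = r" using False r by (simp add: e1_def norm_scaleC norm_divide)
  define M where "M = (\<lambda>z::complex. (c - z) / (1 - cnj c * z))"
  define k where "k = (\<lambda>l. M (g (z0 + scaleC l e1)))"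
  have inball: "z0 + scaleC l e1 \<in> ball z0 r" if "cmod l < 1" for l
  proof -
    have "norm (scaleC l e1) < r" using that r by (simp add: norm_scaleC ne1)
    then show ?thesis by (simp add: dist_norm)
  qed
  have kd: "(k has_field_derivative ((cnj c * c - 1) / (1 - cnj c * g (z0 + scaleC l e1))^2) * G e1) (at l)"
    if l: "cmod l < 1" and G: "sder g G (z0 + scaleC l e1)" for l G
  proof -
    have gl: "cmod (g (z0 + scaleC l e1)) < 1" using bd inball[OF l] by blast
    show ?thesis unfolding k_def M_def
      by (rule DERIV_chain2[OF M_deriv[OF disc_aut_bound(2)[OF c1 gl]] line_deriv[OF G]])
  qed
  have holk: "k holomorphic_on ball 0 1"
  proof -
    have "k field_differentiable at l" if "l \<in> ball 0 1" for l
    proof -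
      have l: "cmod l < 1" using that by simp
      obtain G where "sder g G (z0 + scaleC l e1)" using hol inball[OF l] by blast
      then show ?thesis using kd[OF l] field_differentiable_def by blast
    qed
    then show ?thesis by (simp add: holomorphic_on_def field_differentiable_at_within)
  qed
  have k0: "k 0 = 0" by (simp add: k_def M_def c_def)
  have kb: "cmod (k l) < 1" if "cmod l < 1" for l
    unfolding k_def M_def using disc_aut_bound(1)[OF c1 bd[OF inball[OF that]]] .
  have nd: "norm (deriv k 0) \<le> 1"
    using Schwarz_Lemma(2)[OF holk k0 kb, of 0] by simp
  define q where "q = (cmod c)^2"
  have q1: "q < 1" using c1 by (simp add: q_def abs_square_less_1)
  have eq: "cnj c * c = of_real q" unfolding q_def by (simp only: complex_norm_square mult.commute)
  have gen: "(q - 1) / (1 - q)^2 = - 1 / (1 - q)"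
  proof -
    have "1 - q \<noteq> 0" using q1 by simp
    then show ?thesis by (simp add: power2_eq_square divide_simps)
  qed
  have "deriv k 0 = ((cnj c * c - 1) / (1 - cnj c * c)^2) * G0 e1"
    using kd[of 0 G0] G0 by (simp add: DERIV_imp_deriv c_def)
  also have "(cnj c * c - 1) / (1 - cnj c * c)^2 = of_real ((q - 1) / (1 - q)^2)"
    unfolding eq by simp
  finally have "deriv k 0 = of_real (- 1 / (1 - q)) * G0 e1" unfolding gen .
  moreover have nq: "cmod (1 - complex_of_real q) = 1 - q"
  proof -
    have "cmod (1 - complex_of_real q) = cmod (complex_of_real (1 - q))" by simp
    also have "\<dots> = 1 - q" using q1 by (simp only: norm_of_real)
    finally show ?thesis .
  qed
  ultimately have "norm (deriv k 0) = cmod (G0 e1) / (1 - q)"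
    using q1 by (simp add: norm_mult norm_divide)
  then have "cmod (G0 e1) / (1 - q) \<le> 1" using nd by simp
  then have "cmod (G0 e1) \<le> 1 - (cmod c)^2" using q1 by (simp add: field_simps q_def)
  moreover have "G0 e1 = of_real (r / norm e) * G0 e" using G0 by (simp add: sder_def e1_def)
  ultimately have "(r / norm e) * cmod (G0 e) \<le> 1 - (cmod c)^2" using r by (simp add: norm_mult norm_divide)
  then show ?thesis using False r by (simp add: c_def field_simps)
qed

lemma tanh_artanh:
  fixes r :: real
  assumes "-1 < r" "r < 1"
  shows "tanh (artanh r) = r"
proof -
  have K: "(1 + r) / (1 - r) > 0" using assms by simp
  have "exp (- 2 * artanh r) = exp (- ln ((1 + r) / (1 - r)))" by (simp add: artanh_def)
  also have "\<dots> = (1 - r) / (1 + r)" using K by (simp add: exp_minus)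
  finally have e: "exp (- 2 * artanh r) = (1 - r) / (1 + r)" .
  show ?thesis unfolding tanh_real_altdef e using assms by (simp add: field_simps)
qed

lemma cmod_cinner_lt1:
  fixes z u :: "'a::chilbert"
  assumes "norm z < 1" "norm u = 1"
  shows "cmod (cinner z u) < 1"
  using cauchy_schwarz_c[of z u] assms by simp

lemma BS:
  fixes \<Theta> :: "'a::chilbert \<Rightarrow> 'a"
  assumes hol: "\<And>z. z \<in> ball 0 1 \<Longrightarrow> \<exists>L. vder \<Theta> L z"
    and into: "\<And>z. z \<in> ball 0 1 \<Longrightarrow> norm (\<Theta> z) < 1"
    and T0: "\<Theta> 0 = 0"
    and L0: "vder \<Theta> L0 0"
  shows "norm (L0 v) \<le> norm v"
proof (cases "L0 v = 0")
  case True then show ?thesis by simp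
next
  case False
  define N where "N = norm (L0 v)"
  have N: "N > 0" using False by (simp add: N_def)
  define u where "u = scaleC (of_real (1 / N)) (L0 v)"
  have nu: "norm u = 1" using N by (simp add: u_def norm_scaleC N_def norm_divide)
  define g where "g = (\<lambda>z. cinner (\<Theta> z) u)"
  have "cmod (cinner (L0 v) u) * 1 \<le> (1 - (cmod (g 0))^2) * norm v"
  proof (rule SP[of 1 0 g])
    show "\<exists>G. sder g G z" if "z \<in> ball 0 1" for z
      using hol[OF that] sder_cinner unfolding g_def by blast
    show "cmod (g z) < 1" if "z \<in> ball 0 1" for z
      unfolding g_def using cmod_cinner_lt1[OF into[OF that] nu] .
    show "sder g (\<lambda>h. cinner (L0 h) u) 0" unfolding g_def by (rule sder_cinner[OF L0])
  qed simp
  moreover have "cinner (L0 v) u = of_real N"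
    using N by (simp add: u_def cinner_scaleC_right cinner_self_norm N_def power2_eq_square)
  ultimately show ?thesis using N by (simp add: g_def T0 N_def)
qed

lemma phi_inv_deriv:
  fixes q k :: "'a::chilbert"
  assumes q: "norm q < 1"
  shows "Dphi q 0 (Dphi q q k) = k"
proof -
  have qq: "cinner q q \<noteq> 1" using cinner_ne_1[OF q q] .
  have d1: "vder (phi q) (Dphi q q) q" by (rule vder_phi[OF qq])
  have d2: "vder (phi q) (Dphi q 0) (phi q q)" unfolding phi_self by (rule vder_phi) simp
  have "((\<lambda>z. phi q (phi q z)) has_derivative (\<lambda>h. Dphi q 0 (Dphi q q h))) (at q)"
    using vder_comp[OF d1 d2] unfolding vder_def by blast
  then have "((\<lambda>z. z) has_derivative (\<lambda>h. Dphi q 0 (Dphi q q h))) (at q)"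
  proof (rule has_derivative_transform_within_open[where s="ball 0 1"])
    show "open (ball (0::'a) 1)" by simp
    show "q \<in> ball 0 1" using q by simp
    show "phi q (phi q z) = z" if "z \<in> ball 0 1" for z
      using that q by (intro phi_phi cinner_ne_1) auto
  qed
  then have "(\<lambda>h. Dphi q 0 (Dphi q q h)) = (\<lambda>h. h)"
    using has_derivative_unique has_derivative_ident by blast
  then show ?thesis by (metis)
qed

lemma inv_norm_le:
  assumes "inv_norm f \<le> 1" "z \<in> ball 0 1"
  shows "dnorm (f \<circ> phi z) 0 \<le> 1"
proof -
  have "ereal (dnorm (f \<circ> phi z) 0) \<le> inv_norm f"
    unfolding inv_norm_def using assms(2) by (rule SUP_upper)
  then have "ereal (dnorm (f \<circ> phi z) 0) \<le> 1" using assms(1) by (rule order_trans)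
  then show ?thesis by (simp add: one_ereal_def)
qed

lemma Kbound:
  fixes f :: "'a::chilbert \<Rightarrow> complex"
  assumes inv: "inv_norm f \<le> 1" and q: "norm q < 1" and G: "sder f G q"
  shows "cmod (G (Dphi q 0 e)) \<le> norm e"
proof -
  have g: "sder f G (phi q 0)" using G by (simp add: phi_0)
  have v: "vder (phi q) (Dphi q 0) 0" by (rule vder_phi) simp
  have s: "sder (\<lambda>z. f (phi q z)) (\<lambda>h. G (Dphi q 0 h)) 0"
    by (rule sder_comp[OF v g])
  have "dnorm (\<lambda>z. f (phi q z)) 0 \<le> 1"
    using inv_norm_le[OF inv, of q] q by (simp add: comp_def)
  then have "onorm (\<lambda>h. G (Dphi q 0 h)) \<le> 1" using dnorm_sder[OF s] by simp
  moreover have "cmod (G (Dphi q 0 e)) \<le> onorm (\<lambda>h. G (Dphi q 0 h)) * norm e"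
    by (rule onorm[OF sder_linear[OF s]])
  moreover have "onorm (\<lambda>h. G (Dphi q 0 h)) * norm e \<le> 1 * norm e"
    using calculation(1) by (rule mult_right_mono) simp
  ultimately show ?thesis by linarith
qed

lemma deriv_bound:
  fixes f :: "'a::chilbert \<Rightarrow> complex" and x v :: 'a
  assumes inv: "inv_norm f \<le> 1" and x: "norm x < 1" and v: "norm v = 1" and t: "\<bar>t\<bar> < 1"
    and G: "sder f G (phi x (t *\<^sub>R v))"
  shows "cmod (G (Dphi x (t *\<^sub>R v) v)) * (1 - t^2) \<le> 1"
proof -
  define p where "p = t *\<^sub>R v"
  define q where "q = phi x p"
  have np: "norm p < 1" using t v by (simp add: p_def)
  have nq: "norm q < 1" using phi_ball[OF x np] by (simp add: q_def)
  define e where "e = Dphi q q (Dphi x p v)"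
  have "G (Dphi x p v) = G (Dphi q 0 e)" using phi_inv_deriv[OF nq] by (simp add: e_def)
  then have Ge: "cmod (G (Dphi x p v)) \<le> norm e"
    using Kbound[OF inv nq] G by (simp add: q_def p_def)
  define \<Theta> where "\<Theta> = (\<lambda>z. phi q (phi x (phi p z)))"
  have vd: "vder \<Theta> (\<lambda>h. Dphi q (phi x (phi p z)) (Dphi x (phi p z) (Dphi p z h))) z"
    if "z \<in> ball 0 1" for z
  proof -
    have nz: "norm z < 1" using that by simp
    have a1: "vder (phi p) (Dphi p z) z" by (rule vder_phi[OF cinner_ne_1[OF nz np]])
    have n2: "norm (phi p z) < 1" by (rule phi_ball[OF np nz])
    have a2: "vder (phi x) (Dphi x (phi p z)) (phi p z)" by (rule vder_phi[OF cinner_ne_1[OF n2 x]])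
    have n3: "norm (phi x (phi p z)) < 1" by (rule phi_ball[OF x n2])
    have a3: "vder (phi q) (Dphi q (phi x (phi p z))) (phi x (phi p z))"
      by (rule vder_phi[OF cinner_ne_1[OF n3 nq]])
    show ?thesis unfolding \<Theta>_def by (rule vder_comp[OF vder_comp[OF a1 a2] a3])
  qed
  have L0: "vder \<Theta> (\<lambda>h. Dphi q q (Dphi x p (Dphi p 0 h))) 0"
    using vd[of 0] by (simp add: phi_0 q_def)
  have "norm (Dphi q q (Dphi x p (Dphi p 0 v))) \<le> norm v"
  proof (rule BS[OF _ _ _ L0])
    show "\<exists>L. vder \<Theta> L z" if "z \<in> ball 0 1" for z using vd[OF that] by blast
    show "norm (\<Theta> z) < 1" if "z \<in> ball 0 1" for z
      unfolding \<Theta>_def using that np x nq by (intro phi_ball) auto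
    show "\<Theta> 0 = 0" by (simp add: \<Theta>_def phi_0 q_def[symmetric] phi_self)
  qed
  moreover have "Dphi q q (Dphi x p (Dphi p 0 v)) = (- (1 - t^2)) *\<^sub>R e"
  proof -
    have l1: "linear (Dphi x p)"
      using vder_linear[OF vder_phi[OF cinner_ne_1[OF np x]]] bounded_linear.linear by blast
    have l2: "linear (Dphi q q)"
      using vder_linear[OF vder_phi[OF cinner_ne_1[OF nq nq]]] bounded_linear.linear by blast
    show ?thesis unfolding p_def Dphi_radial[OF v] using l1 l2
      by (simp add: linear_scale e_def p_def)
  qed
  moreover have ab: "\<bar>t^2 - 1\<bar> = 1 - t^2"
  proof -
    have "t^2 < 1" using t by (simp add: abs_square_less_1)
    then show ?thesis by (simp add: abs_if)
  qed
  ultimately have "(1 - t^2) * norm e \<le> 1" using v t by simp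
  moreover have "1 - t^2 > 0" using t by (simp add: abs_square_less_1)
  ultimately have h1: "norm e * (1 - t^2) \<le> 1" and h2: "1 - t^2 > 0" by (simp_all add: mult.commute)
  have "cmod (G (Dphi x p v)) * (1 - t^2) \<le> norm e * (1 - t^2)"
    using Ge h2 by (intro mult_right_mono) simp_all
  then show ?thesis using h1 unfolding p_def by linarith
qed

lemma artanh_nonneg':
  fixes r :: real assumes "0 \<le> r" "r < 1" shows "artanh r \<ge> 0"
proof -
  have "(1 + r) / (1 - r) \<ge> 1" using assms by (simp add: field_simps)
  then show ?thesis by (simp add: artanh_def)
qed

lemma upper:
  fixes f :: "'a::chilbert \<Rightarrow> complex" and x y :: 'a
  assumes x: "x \<in> ball 0 1" and y: "y \<in> ball 0 1" and fb: "f \<in> bloch" and inv: "inv_norm f \<le> 1"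
  shows "cmod (f x - f y) \<le> betaE x y"
proof -
  have nx: "norm x < 1" and ny: "norm y < 1" using x y by auto
  have hol: "hholo_on f (ball 0 1)" using fb by (simp add: bloch_def)
  define w where "w = phi x y"
  define \<rho> where "\<rho> = norm w"
  have r1: "\<rho> < 1" using phi_ball[OF nx ny] by (simp add: \<rho>_def w_def)
  have r0: "\<rho> \<ge> 0" by (simp add: \<rho>_def)
  have yw: "phi x w = y" unfolding w_def by (rule phi_phi[OF nx cinner_ne_1[OF ny nx]])
  have beta: "betaE x y = artanh \<rho>" by (simp add: betaE_def rhoE_def artanh_def w_def \<rho>_def)
  show ?thesis
  proof (cases "\<rho> = 0")
    case True
    then have "w = 0" by (simp add: \<rho>_def)
    then have "y = x" using yw by (simp add: phi_0)
    then show ?thesis using beta True by simp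
  next
    case False
    then have rp: "\<rho> > 0" using r0 by simp
    define v where "v = (1 / \<rho>) *\<^sub>R w"
    have nv: "norm v = 1" using rp by (simp add: v_def \<rho>_def)
    have rv: "\<rho> *\<^sub>R v = w" using rp by (simp add: v_def)
    define H where "H = (\<lambda>\<sigma>. f (phi x (tanh \<sigma> *\<^sub>R v)))"
    have der: "\<exists>L. (H has_derivative L) (at \<sigma>) \<and> onorm L \<le> 1" for \<sigma>
    proof -
      define t where "t = tanh \<sigma>"
      have t1: "\<bar>t\<bar> < 1" using tanh_real_bounds[of \<sigma>] by (auto simp: t_def)
      define p where "p = t *\<^sub>R v"
      have np: "norm p < 1" using t1 nv by (simp add: p_def)
      define q where "q = phi x p"
      have nq: "norm q < 1" using phi_ball[OF nx np] by (simp add: q_def)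
      obtain G where G: "sder f G q" using hholo_sder[OF hol] nq by auto
      define D where "D = 1 - t^2"
      have d0: "((\<lambda>\<sigma>. tanh \<sigma>) has_real_derivative D) (at \<sigma>)"
        unfolding D_def t_def by (auto intro!: derivative_eq_intros)
      have d1: "((\<lambda>\<sigma>. tanh \<sigma> *\<^sub>R v) has_derivative (\<lambda>h. (D * h) *\<^sub>R v)) (at \<sigma>)"
        using bounded_linear.has_derivative[OF bounded_linear_scaleR_left d0[unfolded has_field_derivative_def]] .
      have d2: "(phi x has_derivative Dphi x p) (at (tanh \<sigma> *\<^sub>R v))"
        using vder_phi[OF cinner_ne_1[OF np nx]] by (simp add: vder_def p_def t_def)
      have d3: "(f has_derivative G) (at (phi x (tanh \<sigma> *\<^sub>R v)))"
        using G by (simp add: sder_def q_def p_def t_def)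
      have dH: "(H has_derivative (\<lambda>h. G (Dphi x p ((D * h) *\<^sub>R v)))) (at \<sigma>)"
        unfolding H_def using has_derivative_compose[OF has_derivative_compose[OF d1 d2] d3] .
      have lin: "linear (\<lambda>u. G (Dphi x p u))"
        using sder_linear[OF sder_comp[OF vder_phi[OF cinner_ne_1[OF np nx]] G[unfolded q_def]]]
        by (simp add: bounded_linear.linear)
      have db: "cmod (G (Dphi x p v)) * D \<le> 1"
        using deriv_bound[OF inv nx nv t1] G by (simp add: D_def p_def q_def)
      have D0: "D > 0" using t1 by (simp add: D_def abs_square_less_1)
      have "onorm (\<lambda>h. G (Dphi x p ((D * h) *\<^sub>R v))) \<le> 1"
      proof (rule onorm_bound)
        fix h :: real
        have "G (Dphi x p ((D * h) *\<^sub>R v)) = (D * h) *\<^sub>R G (Dphi x p v)"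
          using linear_scale[OF lin] by simp
        then have "norm (G (Dphi x p ((D * h) *\<^sub>R v))) = \<bar>h\<bar> * (cmod (G (Dphi x p v)) * D)"
          using D0 by (simp add: abs_mult)
        also have "\<dots> \<le> \<bar>h\<bar> * 1" using db by (intro mult_left_mono) simp_all
        finally show "norm (G (Dphi x p ((D * h) *\<^sub>R v))) \<le> 1 * norm h" by simp
      qed simp
      then show ?thesis using dH by blast
    qed
    then obtain L where L: "\<And>\<sigma>. (H has_derivative L \<sigma>) (at \<sigma>)" "\<And>\<sigma>. onorm (L \<sigma>) \<le> 1"
      by metis
    have "norm (H (artanh \<rho>) - H 0) \<le> 1 * norm (artanh \<rho> - 0)"
      by (rule differentiable_bound[of UNIV H L]) (auto intro: L has_derivative_at_withinI)
    moreover have "H (artanh \<rho>) = f y" using r0 r1 by (simp add: H_def tanh_artanh rv yw)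
    moreover have "H 0 = f x" by (simp add: H_def phi_0)
    moreover have "artanh \<rho> \<ge> 0" using artanh_nonneg'[OF r0 r1] .
    ultimately show ?thesis using beta by (simp add: norm_minus_commute)
  qed
qed

definition Tf :: "complex \<Rightarrow> complex" where
  "Tf z = Ln ((1 + z) / (1 - z)) / 2"

lemma Re_mobius_pos:
  fixes z :: complex assumes "cmod z < 1"
  shows "Re ((1 + z) / (1 - z)) > 0"
proof -
  have z1: "1 - z \<noteq> 0" using assms by auto
  have "(cmod z)^2 < 1" using assms by (simp add: abs_square_less_1)
  then have "(Re z)^2 + (Im z)^2 < 1" by (simp add: cmod_power2)
  then have num: "Re (1 + z) * Re (1 - z) + Im (1 + z) * Im (1 - z) > 0"
    by (simp add: power2_eq_square algebra_simps)
  have "(cmod (1 - z))^2 > 0" using z1 by simp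
  then have den: "(Re (1 - z))^2 + (Im (1 - z))^2 > 0" by (simp only: cmod_power2)
  show ?thesis unfolding Re_divide by (rule divide_pos_pos[OF num den])
qed

lemma Tf_deriv:
  fixes z :: complex assumes z: "cmod z < 1"
  shows "(Tf has_field_derivative (1 / (1 - z^2))) (at z)"
proof -
  have z1: "1 - z \<noteq> 0" and z2: "1 + z \<noteq> 0" using z by (auto simp: add_eq_0_iff)
  have np: "(1 + z) / (1 - z) \<notin> \<real>\<^sub>\<le>\<^sub>0"
    using Re_mobius_pos[OF z] by (simp add: complex_nonpos_Reals_iff)
  have m: "((\<lambda>z. (1 + z) / (1 - z)) has_field_derivative (2 / (1 - z)^2)) (at z)"
    using z1 by (auto intro!: derivative_eq_intros simp: field_simps power2_eq_square)
  have "((\<lambda>z. Ln ((1 + z) / (1 - z))) has_field_derivative inverse ((1 + z) / (1 - z)) * (2 / (1 - z)^2)) (at z)"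
    by (rule DERIV_chain2[OF has_field_derivative_Ln[OF np] m])
  then have "((\<lambda>z. Ln ((1 + z) / (1 - z)) / 2) has_field_derivative inverse ((1 + z) / (1 - z)) * (2 / (1 - z)^2) / 2) (at z)"
    by (rule DERIV_cdivide)
  moreover have "inverse ((1 + z) / (1 - z)) * (2 / (1 - z)^2) / 2 = 1 / (1 - z^2)"
  proof -
    have gen: "inverse (a / b) * (2 / b^2) / 2 = 1 / (a * b)" if "a \<noteq> 0" "b \<noteq> 0" for a b :: complex
      using that by (simp add: field_simps power2_eq_square)
    have e: "(1 + z) * (1 - z) = 1 - z^2" by (simp add: power2_eq_square algebra_simps)
    show ?thesis using gen[OF z2 z1] unfolding e .
  qed
  ultimately show ?thesis unfolding Tf_def[abs_def] by simp
qed

lemma Tf_deriv_bound: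
  fixes c :: complex assumes c: "cmod c < 1"
  shows "cmod (1 / (1 - c^2)) * (1 - (cmod c)^2) \<le> 1"
proof -
  have c2: "(cmod c)^2 < 1" using c by (simp add: abs_square_less_1)
  have "1 - (cmod c)^2 \<le> cmod (1 - c^2)"
    using norm_triangle_ineq2[of 1 "c^2"] by (simp add: norm_power)
  then show ?thesis using c2 by (simp add: norm_divide divide_simps)
qed

lemma Tf_0: "Tf 0 = 0" by (simp add: Tf_def)

lemma Tf_real:
  fixes r :: real assumes "0 \<le> r" "r < 1"
  shows "Tf (of_real r) = of_real (artanh r)"
proof -
  have "(1 + complex_of_real r) / (1 - complex_of_real r) = of_real ((1 + r) / (1 - r))" by simp
  moreover have "(1 + r) / (1 - r) > 0" using assms by simp
  ultimately show ?thesis unfolding Tf_def artanh_def by (simp add: Ln_of_real del: of_real_divide) simp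
qed

lemma hholo_of_sder:
  assumes "open U" "\<And>z. z \<in> U \<Longrightarrow> \<exists>G. sder f G z"
  shows "hholo_on f U"
  using assms unfolding hholo_on_def sder_def by blast

lemma zero_fun_ok:
  shows "(\<lambda>_. 0 :: complex) \<in> (bloch :: ('a::chilbert \<Rightarrow> complex) set) \<and> inv_norm (\<lambda>_::'a. 0 :: complex) \<le> 1"
proof -
  have s: "sder (\<lambda>_::'a. 0::complex) (\<lambda>_. 0) z" for z
    by (simp add: sder_def)
  have dn: "dnorm (\<lambda>_::'a. 0::complex) z = 0" for z
    using dnorm_sder[OF s] by (simp add: onorm_zero)
  have "hholo_on (\<lambda>_::'a. 0::complex) (ball 0 1)" by (rule hholo_of_sder) (use s in auto)
  moreover have "bdd_above ((\<lambda>x. (1 - (norm x)^2) * dnorm (\<lambda>_::'a. 0::complex) x) ` ball 0 1)"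
    by (auto simp: dn bdd_above_def)
  ultimately have "(\<lambda>_. 0 :: complex) \<in> (bloch :: ('a \<Rightarrow> complex) set)" by (simp add: bloch_def)
  moreover have "inv_norm (\<lambda>_::'a. 0 :: complex) \<le> 1"
    unfolding inv_norm_def by (rule SUP_least) (simp add: comp_def dn)
  ultimately show ?thesis by simp
qed

lemma lower:
  fixes x y :: "'a::chilbert"
  assumes nx: "norm x < 1" and ny: "norm y < 1"
  shows "\<exists>f. f \<in> bloch \<and> inv_norm f \<le> 1 \<and> cmod (f x - f y) = betaE x y"
proof -
  define w where "w = phi x y"
  define \<rho> where "\<rho> = norm w"
  have r1: "\<rho> < 1" using phi_ball[OF nx ny] by (simp add: \<rho>_def w_def)
  have r0: "\<rho> \<ge> 0" by (simp add: \<rho>_def)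
  have beta: "betaE x y = artanh \<rho>" by (simp add: betaE_def rhoE_def artanh_def w_def \<rho>_def)
  show ?thesis
  proof (cases "\<rho> = 0")
    case True
    then show ?thesis using zero_fun_ok beta by (intro exI[of _ "\<lambda>_. 0"]) auto
  next
    case False
    then have rp: "\<rho> > 0" using r0 by simp
    define u where "u = (1 / \<rho>) *\<^sub>R w"
    have nu: "norm u = 1" using rp by (simp add: u_def \<rho>_def)
    define hh where "hh = (\<lambda>z. cinner (phi x z) u)"
    define f0 where "f0 = (\<lambda>z. Tf (hh z))"
    have sh: "sder hh (\<lambda>k. cinner (Dphi x z k) u) z" if "norm z < 1" for z
      unfolding hh_def by (rule sder_cinner[OF vder_phi[OF cinner_ne_1[OF that nx]]])
    have hb: "cmod (hh z) < 1" if "norm z < 1" for z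
      unfolding hh_def by (rule cmod_cinner_lt1[OF phi_ball[OF nx that] nu])
    have sf: "sder f0 (\<lambda>k. (1 / (1 - (hh z)^2)) * cinner (Dphi x z k) u) z" if "norm z < 1" for z
      unfolding f0_def by (rule sder_field[OF sh[OF that] Tf_deriv[OF hb[OF that]]])
    have hol: "hholo_on f0 (ball 0 1)" by (rule hholo_of_sder) (use sf in auto)
    have inv: "inv_norm f0 \<le> 1"
      unfolding inv_norm_def
    proof (rule SUP_least)
      fix z :: 'a assume z: "z \<in> ball 0 1"
      then have nz: "norm z < 1" by simp
      define g where "g = (\<lambda>v. hh (phi z v))"
      have sg: "\<exists>G. sder g G v" if "v \<in> ball 0 1" for v
      proof -
        have nv: "norm v < 1" using that by simp
        have "sder g (\<lambda>k. cinner (Dphi x (phi z v) (Dphi z v k)) u) v"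
          unfolding g_def
          by (rule sder_comp[OF vder_phi[OF cinner_ne_1[OF nv nz]] sh[OF phi_ball[OF nz nv]]])
        then show ?thesis by blast
      qed
      have gb: "cmod (g v) < 1" if "v \<in> ball 0 1" for v
        using that unfolding g_def by (intro hb phi_ball[OF nz]) auto
      define G0 where "G0 = (\<lambda>k. cinner (Dphi x z (Dphi z 0 k)) u)"
      have sg0: "sder g G0 0"
      proof -
        have a: "sder hh (\<lambda>k. cinner (Dphi x z k) u) (phi z 0)" using sh[OF nz] by (simp add: phi_0)
        have v: "vder (phi z) (Dphi z 0) 0" by (rule vder_phi) simp
        show ?thesis unfolding g_def G0_def by (rule sder_comp[OF v a])
      qed
      have g0: "g 0 = hh z" by (simp add: g_def phi_0)
      have SPb: "cmod (G0 e) * 1 \<le> (1 - (cmod (g 0))^2) * norm e" for e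
        by (rule SP[of 1 0 g, OF _ sg gb sg0]) auto
      have sfc: "sder (\<lambda>v. Tf (g v)) (\<lambda>k. (1 / (1 - (g 0)^2)) * G0 k) 0"
        by (rule sder_field[OF sg0 Tf_deriv]) (use hb[OF nz] g0 in simp)
      have "onorm (\<lambda>k. (1 / (1 - (g 0)^2)) * G0 k) \<le> 1"
      proof (rule onorm_bound)
        fix k :: 'a
        have "cmod ((1 / (1 - (g 0)^2)) * G0 k) = cmod (1 / (1 - (g 0)^2)) * cmod (G0 k)"
          by (rule norm_mult)
        also have "\<dots> \<le> cmod (1 / (1 - (g 0)^2)) * ((1 - (cmod (g 0))^2) * norm k)"
          using SPb[of k] by (intro mult_left_mono) simp_all
        also have "\<dots> = (cmod (1 / (1 - (g 0)^2)) * (1 - (cmod (g 0))^2)) * norm k" by simp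
        also have "\<dots> \<le> 1 * norm k"
          using Tf_deriv_bound[OF hb[OF nz]] g0 by (intro mult_right_mono) simp_all
        finally show "cmod ((1 / (1 - (g 0)^2)) * G0 k) \<le> 1 * norm k" .
      qed simp
      moreover have "f0 \<circ> phi z = (\<lambda>v. Tf (g v))" by (simp add: fun_eq_iff f0_def g_def)
      ultimately show "ereal (dnorm (f0 \<circ> phi z) 0) \<le> 1"
        using dnorm_sder[OF sfc] by (simp add: one_ereal_def)
    qed
    have bb: "(1 - (norm z)^2) * dnorm f0 z \<le> 2" if z: "z \<in> ball 0 1" for z
    proof -
      have nz: "norm z < 1" using z by simp
      define r where "r = 1 - norm z"
      have r: "r > 0" using nz by (simp add: r_def)
      have sub: "norm v < 1" if "v \<in> ball z r" for v
      proof -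
        have "norm v \<le> norm z + norm (v - z)" by (metis add.commute diff_add_cancel norm_triangle_ineq)
        moreover have "norm (v - z) < r" using that by (simp add: dist_norm norm_minus_commute)
        ultimately show ?thesis by (simp add: r_def)
      qed
      define Hz where "Hz = (\<lambda>k. cinner (Dphi x z k) u)"
      have SPb: "cmod (Hz e) * r \<le> (1 - (cmod (hh z))^2) * norm e" for e
      proof (rule SP[OF r])
        show "\<exists>G. sder hh G v" if "v \<in> ball z r" for v using sh[OF sub[OF that]] by blast
        show "cmod (hh v) < 1" if "v \<in> ball z r" for v using hb[OF sub[OF that]] .
        show "sder hh Hz z" unfolding Hz_def by (rule sh[OF nz])
      qed
      have "onorm (\<lambda>k. (1 / (1 - (hh z)^2)) * Hz k) \<le> 1 / r"
      proof (rule onorm_bound)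
        fix k :: 'a
        have "cmod ((1 / (1 - (hh z)^2)) * Hz k) = cmod (1 / (1 - (hh z)^2)) * cmod (Hz k)"
          by (rule norm_mult)
        also have "\<dots> \<le> cmod (1 / (1 - (hh z)^2)) * ((1 - (cmod (hh z))^2) * norm k / r)"
          using SPb[of k] r by (intro mult_left_mono) (simp_all add: field_simps)
        also have "\<dots> = (cmod (1 / (1 - (hh z)^2)) * (1 - (cmod (hh z))^2)) * (norm k / r)" by simp
        also have "\<dots> \<le> 1 * (norm k / r)"
          using Tf_deriv_bound[OF hb[OF nz]] r by (intro mult_right_mono) simp_all
        finally show "cmod ((1 / (1 - (hh z)^2)) * Hz k) \<le> 1 / r * norm k" by simp
      qed (use r in simp)
      then have dn: "dnorm f0 z \<le> 1 / r" using dnorm_sder[OF sf[OF nz]] by (simp add: Hz_def)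
      have "(1 - (norm z)^2) * dnorm f0 z \<le> (1 - (norm z)^2) * (1 / r)"
        using dn nz by (intro mult_left_mono) (simp_all add: abs_square_less_1 abs_square_le_1 less_imp_le)
      also have "\<dots> = 1 + norm z" using r by (simp add: r_def field_simps power2_eq_square)
      also have "\<dots> \<le> 2" using nz by simp
      finally show ?thesis .
    qed
    have fb: "f0 \<in> bloch"
    proof -
      have "bdd_above ((\<lambda>x. (1 - (norm x)^2) * dnorm f0 x) ` ball 0 1)"
        unfolding bdd_above_def using bb by (intro exI[of _ 2]) auto
      then show ?thesis unfolding bloch_def using hol by simp
    qed
    have fx: "f0 x = 0" by (simp add: f0_def hh_def phi_self Tf_0)
    have "cinner w u = of_real \<rho>"
      using rp by (simp add: u_def cinner_scaleR_right cinner_self_norm \<rho>_def power2_eq_square)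
    then have fy: "f0 y = of_real (artanh \<rho>)"
      by (simp add: f0_def hh_def w_def[symmetric] Tf_real[OF r0 r1])
    have "cmod (f0 x - f0 y) = betaE x y"
      using artanh_nonneg'[OF r0 r1] by (simp add: fx fy beta)
    then show ?thesis using fb inv by blast
  qed
qed

theorem corollary3p5:
  fixes x y :: "'a::chilbert"
  assumes "x \<in> ball 0 1" and "y \<in> ball 0 1"
  shows "betaE x y = Sup {cmod (f x - f y) | f. f \<in> bloch \<and> inv_norm f \<le> 1}"
proof -
  have nx: "norm x < 1" and ny: "norm y < 1" using assms by auto
  obtain f where f: "f \<in> bloch" "inv_norm f \<le> 1" "cmod (f x - f y) = betaE x y"
    using lower[OF nx ny] by blast
  show ?thesis
  proof (rule cSup_eq_maximum[symmetric])
    show "betaE x y \<in> {cmod (f x - f y) | f. f \<in> bloch \<and> inv_norm f \<le> 1}"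
      using f by (metis (mono_tags, lifting) mem_Collect_eq)
    show "s \<le> betaE x y" if "s \<in> {cmod (f x - f y) | f. f \<in> bloch \<and> inv_norm f \<le> 1}" for s
      using that upper[OF assms] by blast
  qed
qed

end
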